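(* Let $P=K\overline{K}$ and $Q=L\overline{L}$ in $U_{K,L,norm}$. Then $P$ and $Q$ are central idempotents, $PQ=QP=0$, and $U_{K,L,norm}=PU_{K,L,norm}P\oplus QU_{K,L,norm}Q$ is a direct sum of two two-sided ideals. Moreover there is an algebra isomorphism $U_{K,L,norm}\to U_q(sl_2)\oplus U_q(sl_2)$ given by $K\mapsto k\oplus0$, $\overline{K}\mapsto k^{-1}\oplus0$, $PE\mapsto e\oplus0$, $PF\mapsto f\oplus0$, $L\mapsto0\oplus k$, $\overline{L}\mapsto0\oplus k^{-1}$, $QE\mapsto0\oplus e$, $QF\mapsto0\oplus f$ (so $P\mapsto\mathbf{1}\oplus0$, $Q\mapsto0\oplus\mathbf{1}$).
   Context: Fix $q\in\mathbb{C}$, $q\neq 0,\pm1$. $U_q(sl_2)$ is the unital associative $\mathbb{C}$-algebra generated by $k,k^{-1},e,f$ with relations $kk^{-1}=k^{-1}k=\mathbf{1}$, $ke=q^2ek$, $kf=q^{-2}fk$, $ef-fe=(k-k^{-1})/(q-q^{-1})$. $U_{K,L,norm}$ is the unital associative $\mathbb{C}$-algebra generated by $K,\overline{K},L,\overline{L},E,F$ subject to $K\overline{K}K=K$, $\overline{K}K\overline{K}=\overline{K}$, $K\overline{K}=\overline{K}K$, $L\overline{L}L=L$, $\overline{L}L\overline{L}=\overline{L}$, $L\overline{L}=\overline{L}L$, $K\overline{K}+L\overline{L}=\mathbf{1}$, $KE=q^2EK$, $LE=q^2EL$, $\overline{K}E=q^{-2}E\overline{K}$, $\overline{L}E=q^{-2}E\overline{L}$,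 $KF=q^{-2}FK$, $LF=q^{-2}FL$, $\overline{K}F=q^2F\overline{K}$, $\overline{L}F=q^2F\overline{L}$, $EF-FE=\frac{(K+L)-(\overline{K}+\overline{L})}{q-q^{-1}}$. *)

theory Defs
  imports Complex_Main "HOL-Library.Poly_Mapping"
begin

text \<open>Words over an alphabet of generators form the free monoid; we write its
  operation additively so that the library's convolution product on finitely
  supported functions (Poly_Mapping) becomes the product of the free algebra.\<close>

datatype 'g word = Word "'g list"

fun word_list :: "'g word \<Rightarrow> 'g list" where
  "word_list (Word xs) = xs"

instantiation word :: (type) monoid_add
begin
definition zero_word :: "'g word" where "zero_word = Word []"
definition plus_word :: "'g word \<Rightarrow> 'g word \<Rightarrow> 'g word" where
  "plus_word u v = Word (word_list u @ word_list v)"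
instance
proof
  fix a b c :: "'g word"
  show "a + b + c = a + (b + c)" by (cases a; cases b; cases c) (simp add: plus_word_def)
  show "0 + a = a" by (cases a) (simp add: plus_word_def zero_word_def)
  show "a + 0 = a" by (cases a) (simp add: plus_word_def zero_word_def)
qed
end

type_synonym 'g fa = "'g word \<Rightarrow>\<^sub>0 complex"

definition fa_gen :: "'g \<Rightarrow> 'g fa" where
  "fa_gen g = Poly_Mapping.single (Word [g]) 1"

text \<open>Scalar c, i.e. c times the unit; scalar multiplication is multiplication by it.\<close>
definition fa_const :: "complex \<Rightarrow> 'g fa" where
  "fa_const c = Poly_Mapping.single 0 c"

inductive_set gen_ideal :: "'g fa set \<Rightarrow> 'g fa set" for R :: "'g fa set" where
  base: "r \<in> R \<Longrightarrow> r \<in> gen_ideal R"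
| zero: "0 \<in> gen_ideal R"
| add: "a \<in> gen_ideal R \<Longrightarrow> b \<in> gen_ideal R \<Longrightarrow> a + b \<in> gen_ideal R"
| mult: "a \<in> gen_ideal R \<Longrightarrow> x * a * y \<in> gen_ideal R"

text \<open>Congruence modulo an ideal: equality in the quotient algebra.\<close>
definition cong_mod :: "'g fa set \<Rightarrow> 'g fa \<Rightarrow> 'g fa \<Rightarrow> bool" where
  "cong_mod I a b \<longleftrightarrow> a - b \<in> I"

definition alg_hom :: "('g fa \<Rightarrow> 'h fa) \<Rightarrow> bool" where
  "alg_hom \<Psi> \<longleftrightarrow> (\<forall>x y. \<Psi> (x + y) = \<Psi> x + \<Psi> y) \<and> (\<forall>x y. \<Psi> (x * y) = \<Psi> x * \<Psi> y)
     \<and> \<Psi> 1 = 1 \<and> (\<forall>c. \<Psi> (fa_const c) = fa_const c)"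

datatype gq = Gk | Gki | Ge | Gf

definition Uq_rels :: "complex \<Rightarrow> gq fa set" where
  "Uq_rels q = (let k = fa_gen Gk; ki = fa_gen Gki; e = fa_gen Ge; f = fa_gen Gf in
     { k * ki - 1, ki * k - 1,
       k * e - fa_const (q^2) * e * k,
       k * f - fa_const (inverse (q^2)) * f * k,
       e * f - f * e - fa_const (inverse (q - inverse q)) * (k - ki) })"

definition Uq_ideal :: "complex \<Rightarrow> gq fa set" where
  "Uq_ideal q = gen_ideal (Uq_rels q)"

datatype gkl = GK | GKb | GL | GLb | GE | GF

definition UKL_rels :: "complex \<Rightarrow> gkl fa set" where
  "UKL_rels q = (let K = fa_gen GK; Kb = fa_gen GKb; L = fa_gen GL; Lb = fa_gen GLb;
       E = fa_gen GE; F = fa_gen GF in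
     { K * Kb * K - K, Kb * K * Kb - Kb, K * Kb - Kb * K,
       L * Lb * L - L, Lb * L * Lb - Lb, L * Lb - Lb * L,
       K * Kb + L * Lb - 1,
       K * E - fa_const (q^2) * E * K, L * E - fa_const (q^2) * E * L,
       Kb * E - fa_const (inverse (q^2)) * E * Kb, Lb * E - fa_const (inverse (q^2)) * E * Lb,
       K * F - fa_const (inverse (q^2)) * F * K, L * F - fa_const (inverse (q^2)) * F * L,
       Kb * F - fa_const (q^2) * F * Kb, Lb * F - fa_const (q^2) * F * Lb,
       E * F - F * E - fa_const (inverse (q - inverse q)) * ((K + L) - (Kb + Lb)) })"

definition UKL_ideal :: "complex \<Rightarrow> gkl fa set" where
  "UKL_ideal q = gen_ideal (UKL_rels q)"

end

theory Submission
  imports Defs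
begin


lemma fa_const_mult[simp]: "fa_const a * fa_const b = (fa_const (a*b) :: 'g fa)"
  by (simp add: fa_const_def mult_single)
lemma fa_const_one[simp]: "fa_const 1 = 1" by (simp add: fa_const_def)
lemma fa_const_zero[simp]: "fa_const 0 = 0" by (simp add: fa_const_def)
lemma fa_const_add: "fa_const (a + b) = fa_const a + fa_const b" by (simp add: fa_const_def single_add)

lemma upd_eq: "a \<notin> Poly_Mapping.keys f \<Longrightarrow> Poly_Mapping.update a b f = Poly_Mapping.single a b + f"
  by (intro poly_mapping_eqI) (auto simp: lookup_update lookup_add lookup_single not_in_keys_iff_lookup_eq_zero when_def)

lemma pm_induct:
  assumes "P 0" "\<And>a b f. P f \<Longrightarrow> P (Poly_Mapping.single a b + f)"
  shows "P x"
proof (induction x rule: Poly_Mapping.update_induct)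
  case const then show ?case using assms(1) .
next
  case (update f a b) then show ?case using assms(2) by (simp add: upd_eq)
qed

lemma fa_const_comm: "(x::'g fa) * fa_const c = fa_const c * x"
proof (induction x rule: pm_induct)
  case 1 then show ?case by simp
next
  case (2 a b f)
  then show ?case by (simp add: distrib_left distrib_right fa_const_def mult_single mult.commute)
qed

lemma fa_const_left_comm: "(x::'g fa) * (fa_const c * y) = fa_const c * (x * y)"
  by (metis fa_const_comm mult.assoc)
lemma fa_const_comm2: "NO_MATCH (fa_const d) x \<Longrightarrow> (x::'g fa) * fa_const c = fa_const c * x"
  by (rule fa_const_comm)
lemma fa_const_left_comm2: "NO_MATCH (fa_const d) x \<Longrightarrow> (x::'g fa) * (fa_const c * y) = fa_const c * (x * y)"
  by (rule fa_const_left_comm)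
lemma fa_const_mult2[simp]: "fa_const a * (fa_const b * x) = (fa_const (a*b) * x :: 'g fa)"
  by (metis fa_const_mult mult.assoc)

lemmas fs = algebra_simps fa_const_comm2 fa_const_left_comm2

lemma word_plus_list: "word_list (v + w) = word_list v @ word_list w"
  by (cases v; cases w) (simp add: plus_word_def)

lemma single_word_one: "Poly_Mapping.single (Word xs) (1::complex) = foldr (\<lambda>a r. fa_gen a * r) xs 1"
proof (induction xs)
  case Nil then show ?case by (simp add: zero_word_def[symmetric])
next
  case (Cons a xs)
  have "Poly_Mapping.single (Word (a # xs)) (1::complex) = Poly_Mapping.single (Word [a]) 1 * Poly_Mapping.single (Word xs) 1"
    by (simp add: mult_single plus_word_def)
  then show ?case using Cons by (simp add: fa_gen_def)
qed

lemma fa_induct: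
  assumes c: "\<And>c. P (fa_const c)" and g: "\<And>a. P (fa_gen a)"
    and a: "\<And>x y. P x \<Longrightarrow> P y \<Longrightarrow> P (x + y)" and m: "\<And>x y. P x \<Longrightarrow> P y \<Longrightarrow> P (x * y)"
  shows "P (x :: 'g fa)"
proof (induction x rule: pm_induct)
  case 1 then show ?case using c[of 0] by simp
next
  case (2 w b f)
  obtain xs where w: "w = Word xs" by (cases w)
  have s: "Poly_Mapping.single w b = fa_const b * Poly_Mapping.single (Word xs) 1"
    by (simp add: w fa_const_def mult_single)
  have "P (foldr (\<lambda>a r. fa_gen a * r) xs 1)"
    by (induction xs) (use c[of 1] g m in auto)
  then show ?case using 2 s single_word_one by (metis a c m)
qed

fun wpl :: "('g \<Rightarrow> 'h fa) \<Rightarrow> 'g list \<Rightarrow> 'h fa" where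
  "wpl g [] = 1" | "wpl g (a # xs) = g a * wpl g xs"

lemma wpl_append: "wpl g (xs @ ys) = wpl g xs * wpl g ys"
  by (induction xs) (simp_all add: mult.assoc)

definition ext :: "('g \<Rightarrow> 'h fa) \<Rightarrow> 'g fa \<Rightarrow> 'h fa" where
  "ext g x = (\<Sum>w\<in>Poly_Mapping.keys x. fa_const (Poly_Mapping.lookup x w) * wpl g (word_list w))"

lemma ext_superset: "finite S \<Longrightarrow> Poly_Mapping.keys x \<subseteq> S \<Longrightarrow>
   ext g x = (\<Sum>w\<in>S. fa_const (Poly_Mapping.lookup x w) * wpl g (word_list w))"
  unfolding ext_def
  by (rule sum.mono_neutral_left) (auto simp: in_keys_iff)

lemma ext_add: "ext g (x + y) = ext g x + ext g y"
proof -
  let ?S = "Poly_Mapping.keys x \<union> Poly_Mapping.keys y"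
  have "Poly_Mapping.keys (x + y) \<subseteq> ?S" by (rule keys_add)
  then show ?thesis
    by (simp add: ext_superset[of ?S] lookup_add fa_const_add distrib_right sum.distrib)
qed

lemma ext_zero[simp]: "ext g 0 = 0" by (simp add: ext_def)

lemma ext_single: "ext g (Poly_Mapping.single w c) = fa_const c * wpl g (word_list w)"
  by (subst ext_superset[of "{w}"]) auto

lemma ext_mult: "ext g (x * y) = ext g x * ext g y"
proof (induction x rule: pm_induct)
  case 1 then show ?case by simp
next
  case (2 v c f)
  have "ext g (Poly_Mapping.single v c * y) = ext g (Poly_Mapping.single v c) * ext g y"
  proof (induction y rule: pm_induct)
    case 1 then show ?case by simp
  next
    case (2 w d h)
    then show ?case
      by (simp add: distrib_left ext_add mult_single ext_single word_plus_list wpl_append fs)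
  qed
  then show ?case using 2 by (simp add: distrib_right ext_add)
qed

lemma ext_gen[simp]: "ext g (fa_gen a) = g a"
  by (simp add: fa_gen_def ext_single)

lemma ext_const[simp]: "ext g (fa_const c) = fa_const c"
  by (simp add: fa_const_def ext_single zero_word_def)

lemma alg_hom_ext: "alg_hom (ext g)"
  unfolding alg_hom_def using ext_const[of g 1]
  by (simp add: ext_add ext_mult)

lemma gi_lmult: "a \<in> gen_ideal R \<Longrightarrow> x * a \<in> gen_ideal R"
  using gen_ideal.mult[of a R x 1] by simp
lemma gi_rmult: "a \<in> gen_ideal R \<Longrightarrow> a * y \<in> gen_ideal R"
  using gen_ideal.mult[of a R 1 y] by simp
lemma gi_uminus: "a \<in> gen_ideal R \<Longrightarrow> - a \<in> gen_ideal R"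
  using gi_lmult[of a R "fa_const (-1)"] by (simp add: fa_const_def single_uminus)
lemma gi_diff: "a \<in> gen_ideal R \<Longrightarrow> b \<in> gen_ideal R \<Longrightarrow> a - b \<in> gen_ideal R"
  using gen_ideal.add[OF _ gi_uminus] by (metis diff_conv_add_uminus)
lemma gi_eqI: "W \<in> gen_ideal R \<Longrightarrow> X = W \<Longrightarrow> X \<in> gen_ideal R" by simp

lemmas gi_rules = gen_ideal.add gi_diff gi_lmult gi_rmult gi_uminus gen_ideal.zero

lemma ah_add: "alg_hom f \<Longrightarrow> f (x + y) = f x + f y" by (simp add: alg_hom_def)
lemma ah_mult: "alg_hom f \<Longrightarrow> f (x * y) = f x * f y" by (simp add: alg_hom_def)
lemma ah_const: "alg_hom f \<Longrightarrow> f (fa_const c) = fa_const c" by (simp add: alg_hom_def)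
lemma ah_zero: "alg_hom f \<Longrightarrow> f 0 = 0"
  using ah_add[of f 0 0] by simp
lemma ah_diff: "alg_hom f \<Longrightarrow> f (x - y) = f x - f y"
  using ah_add[of f "x - y" y] by (simp add: eq_diff_eq)

lemma ah_ideal:
  assumes "alg_hom f" "\<And>r. r \<in> R \<Longrightarrow> f r \<in> gen_ideal S" "x \<in> gen_ideal R"
  shows "f x \<in> gen_ideal S"
  using assms(3)
proof induction
  case (base r) then show ?case using assms(2) by simp
next
  case zero then show ?case using assms(1) by (simp add: ah_zero gen_ideal.zero)
next
  case (add a b) then show ?case using assms(1) by (simp add: ah_add gen_ideal.add)
next
  case (mult a x y) then show ?case using assms(1) by (simp add: ah_mult gen_ideal.mult)
qed

lemma ah_comp: "alg_hom f \<Longrightarrow> alg_hom g \<Longrightarrow> alg_hom (\<lambda>x. f (g x))"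
  by (simp add: alg_hom_def)

lemma ah_id_mod:
  assumes "alg_hom f" "\<And>a. f (fa_gen a) - fa_gen a \<in> gen_ideal R"
  shows "f x - x \<in> gen_ideal R"
proof (induction x rule: fa_induct)
  case (1 c) then show ?case using assms(1) by (simp add: ah_const gen_ideal.zero)
next
  case (2 a) then show ?case by (rule assms(2))
next
  case (3 x y)
  have "f (x + y) - (x + y) = (f x - x) + (f y - y)" using assms(1) by (simp add: ah_add)
  then show ?case using 3 gen_ideal.add by metis
next
  case (4 x y)
  have "f (x * y) - (x * y) = (f x - x) * f y + x * (f y - y)" using assms(1) by (simp add: ah_mult algebra_simps)
  then show ?case using 4 gen_ideal.add gi_lmult gi_rmult by metis
qed



abbreviation "gK \<equiv> fa_gen GK"
abbreviation "gKb \<equiv> fa_gen GKb"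
abbreviation "gL \<equiv> fa_gen GL"
abbreviation "gLb \<equiv> fa_gen GLb"
abbreviation "gE \<equiv> fa_gen GE"
abbreviation "gF \<equiv> fa_gen GF"
abbreviation "gP \<equiv> gK * gKb"
abbreviation "gQ \<equiv> gL * gLb"



abbreviation "uk \<equiv> fa_gen Gk"
abbreviation "uki \<equiv> fa_gen Gki"
abbreviation "ue \<equiv> fa_gen Ge"
abbreviation "uf \<equiv> fa_gen Gf"

definition h1 :: "gq \<Rightarrow> gkl fa" where
  "h1 a = (case a of Gk \<Rightarrow> gK + gQ | Gki \<Rightarrow> gKb + gQ | Ge \<Rightarrow> gP * gE | Gf \<Rightarrow> gP * gF)"
definition h2 :: "gq \<Rightarrow> gkl fa" where
  "h2 a = (case a of Gk \<Rightarrow> gL + gP | Gki \<Rightarrow> gLb + gP | Ge \<Rightarrow> gQ * gE | Gf \<Rightarrow> gQ * gF)"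
definition g1 :: "gkl \<Rightarrow> gq fa" where
  "g1 a = (case a of GK \<Rightarrow> uk | GKb \<Rightarrow> uki | GL \<Rightarrow> 0 | GLb \<Rightarrow> 0 | GE \<Rightarrow> ue | GF \<Rightarrow> uf)"
definition g2 :: "gkl \<Rightarrow> gq fa" where
  "g2 a = (case a of GK \<Rightarrow> 0 | GKb \<Rightarrow> 0 | GL \<Rightarrow> uk | GLb \<Rightarrow> uki | GE \<Rightarrow> ue | GF \<Rightarrow> uf)"

lemma ext_diff: "ext g (x - y) = ext g x - ext g y"
  by (rule ah_diff[OF alg_hom_ext])
lemma ext_one[simp]: "ext g 1 = 1"
  using alg_hom_ext[of g] by (simp add: alg_hom_def)

lemmas ext_simps = ext_add ext_mult ext_diff h1_def h2_def g1_def g2_def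

context fixes q :: complex assumes q0: "q \<noteq> 0"
begin


abbreviation "II \<equiv> gen_ideal (UKL_rels q)"
abbreviation "c2 \<equiv> (fa_const (q^2) :: gkl fa)"
abbreviation "ci \<equiv> (fa_const (inverse (q^2)) :: gkl fa)"
abbreviation "cd \<equiv> (fa_const (inverse (q - inverse q)) :: gkl fa)"

lemma rels:
  "gK * gKb * gK - gK \<in> II" "gKb * gK * gKb - gKb \<in> II" "gK * gKb - gKb * gK \<in> II"
  "gL * gLb * gL - gL \<in> II" "gLb * gL * gLb - gLb \<in> II" "gL * gLb - gLb * gL \<in> II"
  "gK * gKb + gL * gLb - 1 \<in> II"
  "gK * gE - c2 * gE * gK \<in> II" "gL * gE - c2 * gE * gL \<in> II"
  "gKb * gE - ci * gE * gKb \<in> II" "gLb * gE - ci * gE * gLb \<in> II"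
  "gK * gF - ci * gF * gK \<in> II" "gL * gF - ci * gF * gL \<in> II"
  "gKb * gF - c2 * gF * gKb \<in> II" "gLb * gF - c2 * gF * gLb \<in> II"
  "gE * gF - gF * gE - cd * ((gK + gL) - (gKb + gLb)) \<in> II"
  by (rule gen_ideal.base, simp add: UKL_rels_def Let_def)+

lemma dPP: "gP * gP - gP \<in> II"
  by (rule gi_eqI[where W="(gK * gKb * gK - gK) * gKb"]) (blast intro: gi_rules rels, simp add: fs)

lemma dQQ: "gQ*gQ - gQ \<in> II"
  by (rule gi_eqI[where W="(gL * gLb * gL - gL)*gLb"], blast intro: gi_rules rels dPP, simp add: fs q0)

lemma dPQ: "gP*gQ \<in> II"
  by (rule gi_eqI[where W="gP*(gK * gKb + gL * gLb - 1) - (gP*gP - gP)"], blast intro: gi_rules rels dPP dQQ, simp add: fs q0)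

lemma dQP: "gQ*gP \<in> II"
  by (rule gi_eqI[where W="(gK * gKb + gL * gLb - 1)*gP - (gP*gP - gP)"], blast intro: gi_rules rels dPP dQQ dPQ, simp add: fs q0)

lemma cPK: "gP*gK - gK*gP \<in> II"
  by (rule gi_eqI[where W="-(gK*(gK * gKb - gKb * gK))"], blast intro: gi_rules rels dPP dQQ dPQ dQP, simp add: fs q0)

lemma cPKb: "gP*gKb - gKb*gP \<in> II"
  by (rule gi_eqI[where W="(gK * gKb - gKb * gK)*gKb"], blast intro: gi_rules rels dPP dQQ dPQ dQP cPK, simp add: fs q0)

lemma cPL: "gP*gL - gL*gP \<in> II"
  by (rule gi_eqI[where W="(gP*gQ)*gL - gP*(gL * gLb * gL - gL) - gL*(gQ*gP) + gL*(gL * gLb - gLb * gL)*gP + (gL * gLb * gL - gL)*gP"], blast intro: gi_rules rels dPP dQQ dPQ dQP cPK cPKb, simp add: fs q0)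

lemma cPLb: "gP*gLb - gLb*gP \<in> II"
  by (rule gi_eqI[where W="(gP*gQ)*gLb - gP*(gL * gLb - gLb * gL)*gLb - gP*(gLb * gL * gLb - gLb) - gLb*(gQ*gP) + (gLb * gL * gLb - gLb)*gP"], blast intro: gi_rules rels dPP dQQ dPQ dQP cPK cPKb cPL, simp add: fs q0)

lemma cPE: "gP*gE - gE*gP \<in> II"
  by (rule gi_eqI[where W="gK*(gKb * gE - ci * gE * gKb) + ci*(gK * gE - c2 * gE * gK)*gKb"], blast intro: gi_rules rels dPP dQQ dPQ dQP cPK cPKb cPL cPLb, simp add: fs q0)

lemma cPF: "gP*gF - gF*gP \<in> II"
  by (rule gi_eqI[where W="gK*(gKb * gF - c2 * gF * gKb) + c2*(gK * gF - ci * gF * gK)*gKb"], blast intro: gi_rules rels dPP dQQ dPQ dQP cPK cPKb cPL cPLb cPE, simp add: fs q0)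

lemma cQK: "gQ*gK - gK*gQ \<in> II"
  by (rule gi_eqI[where W="(gQ*gP)*gK - gQ*(gK * gKb * gK - gK) - gK*(gP*gQ) + gK*(gK * gKb - gKb * gK)*gQ + (gK * gKb * gK - gK)*gQ"], blast intro: gi_rules rels dPP dQQ dPQ dQP cPK cPKb cPL cPLb cPE cPF, simp add: fs q0)

lemma cQKb: "gQ*gKb - gKb*gQ \<in> II"
  by (rule gi_eqI[where W="(gQ*gP)*gKb - gQ*(gK * gKb - gKb * gK)*gKb - gQ*(gKb * gK * gKb - gKb) - gKb*(gP*gQ) + (gKb * gK * gKb - gKb)*gQ"], blast intro: gi_rules rels dPP dQQ dPQ dQP cPK cPKb cPL cPLb cPE cPF cQK, simp add: fs q0)

lemma cQL: "gQ*gL - gL*gQ \<in> II"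
  by (rule gi_eqI[where W="-(gL*(gL * gLb - gLb * gL))"], blast intro: gi_rules rels dPP dQQ dPQ dQP cPK cPKb cPL cPLb cPE cPF cQK cQKb, simp add: fs q0)

lemma cQLb: "gQ*gLb - gLb*gQ \<in> II"
  by (rule gi_eqI[where W="(gL * gLb - gLb * gL)*gLb"], blast intro: gi_rules rels dPP dQQ dPQ dQP cPK cPKb cPL cPLb cPE cPF cQK cQKb cQL, simp add: fs q0)

lemma cQE: "gQ*gE - gE*gQ \<in> II"
  by (rule gi_eqI[where W="gL*(gLb * gE - ci * gE * gLb) + ci*(gL * gE - c2 * gE * gL)*gLb"], blast intro: gi_rules rels dPP dQQ dPQ dQP cPK cPKb cPL cPLb cPE cPF cQK cQKb cQL cQLb, simp add: fs q0)

lemma cQF: "gQ*gF - gF*gQ \<in> II"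
  by (rule gi_eqI[where W="gL*(gLb * gF - c2 * gF * gLb) + c2*(gL * gF - ci * gF * gL)*gLb"], blast intro: gi_rules rels dPP dQQ dPQ dQP cPK cPKb cPL cPLb cPE cPF cQK cQKb cQL cQLb cQE, simp add: fs q0)

lemma xQK: "gQ*gK \<in> II"
  by (rule gi_eqI[where W="(gQ*gP)*gK - gQ*(gK * gKb * gK - gK)"], blast intro: gi_rules rels dPP dQQ dPQ dQP cPK cPKb cPL cPLb cPE cPF cQK cQKb cQL cQLb cQE cQF, simp add: fs q0)

lemma xKQ: "gK*gQ \<in> II"
  by (rule gi_eqI[where W="gK*(gP*gQ) - gK*(gK * gKb - gKb * gK)*gQ - (gK * gKb * gK - gK)*gQ"], blast intro: gi_rules rels dPP dQQ dPQ dQP cPK cPKb cPL cPLb cPE cPF cQK cQKb cQL cQLb cQE cQF xQK, simp add: fs q0)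

lemma xQKb: "gQ*gKb \<in> II"
  by (rule gi_eqI[where W="(gQ*gP)*gKb - gQ*(gK * gKb - gKb * gK)*gKb - gQ*(gKb * gK * gKb - gKb)"], blast intro: gi_rules rels dPP dQQ dPQ dQP cPK cPKb cPL cPLb cPE cPF cQK cQKb cQL cQLb cQE cQF xQK xKQ, simp add: fs q0)

lemma xKbQ: "gKb*gQ \<in> II"
  by (rule gi_eqI[where W="gKb*(gP*gQ) - (gKb * gK * gKb - gKb)*gQ"], blast intro: gi_rules rels dPP dQQ dPQ dQP cPK cPKb cPL cPLb cPE cPF cQK cQKb cQL cQLb cQE cQF xQK xKQ xQKb, simp add: fs q0)

lemma xPL: "gP*gL \<in> II"
  by (rule gi_eqI[where W="(gP*gQ)*gL - gP*(gL * gLb * gL - gL)"], blast intro: gi_rules rels dPP dQQ dPQ dQP cPK cPKb cPL cPLb cPE cPF cQK cQKb cQL cQLb cQE cQF xQK xKQ xQKb xKbQ, simp add: fs q0)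

lemma xLP: "gL*gP \<in> II"
  by (rule gi_eqI[where W="gL*(gQ*gP) - gL*(gL * gLb - gLb * gL)*gP - (gL * gLb * gL - gL)*gP"], blast intro: gi_rules rels dPP dQQ dPQ dQP cPK cPKb cPL cPLb cPE cPF cQK cQKb cQL cQLb cQE cQF xQK xKQ xQKb xKbQ xPL, simp add: fs q0)

lemma xPLb: "gP*gLb \<in> II"
  by (rule gi_eqI[where W="(gP*gQ)*gLb - gP*(gL * gLb - gLb * gL)*gLb - gP*(gLb * gL * gLb - gLb)"], blast intro: gi_rules rels dPP dQQ dPQ dQP cPK cPKb cPL cPLb cPE cPF cQK cQKb cQL cQLb cQE cQF xQK xKQ xQKb xKbQ xPL xLP, simp add: fs q0)

lemma xLbP: "gLb*gP \<in> II"
  by (rule gi_eqI[where W="gLb*(gQ*gP) - (gLb * gL * gLb - gLb)*gP"], blast intro: gi_rules rels dPP dQQ dPQ dQP cPK cPKb cPL cPLb cPE cPF cQK cQKb cQL cQLb cQE cQF xQK xKQ xQKb xKbQ xPL xLP xPLb, simp add: fs q0)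

lemma xPKb: "gP*gKb - gKb \<in> II"
  by (rule gi_eqI[where W="(gK * gKb - gKb * gK)*gKb + (gKb * gK * gKb - gKb)"], blast intro: gi_rules rels dPP dQQ dPQ dQP cPK cPKb cPL cPLb cPE cPF cQK cQKb cQL cQLb cQE cQF xQK xKQ xQKb xKbQ xPL xLP xPLb xLbP, simp add: fs q0)

lemma xQLb: "gQ*gLb - gLb \<in> II"
  by (rule gi_eqI[where W="(gL * gLb - gLb * gL)*gLb + (gLb * gL * gLb - gLb)"], blast intro: gi_rules rels dPP dQQ dPQ dQP cPK cPKb cPL cPLb cPE cPF cQK cQKb cQL cQLb cQE cQF xQK xKQ xQKb xKbQ xPL xLP xPLb xLbP xPKb, simp add: fs q0)



lemma cP: "gP * x - x * gP \<in> II"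
proof (induction x rule: fa_induct)
  case (1 c) show ?case by (simp add: fa_const_comm gen_ideal.zero)
next
  case (2 a) show ?case using cPK cPKb cPL cPLb cPE cPF q0 by (cases a) auto
next
  case (3 x y) show ?case
    by (rule gi_eqI[where W="(gP * x - x * gP) + (gP * y - y * gP)"], blast intro: gi_rules 3, simp add: fs)
next
  case (4 x y) show ?case
    by (rule gi_eqI[where W="(gP * x - x * gP) * y + x * (gP * y - y * gP)"], blast intro: gi_rules 4, simp add: fs)
qed

lemma cQ: "gQ * x - x * gQ \<in> II"
proof (induction x rule: fa_induct)
  case (1 c) show ?case by (simp add: fa_const_comm gen_ideal.zero)
next
  case (2 a) show ?case using cQK cQKb cQL cQLb cQE cQF q0 by (cases a) auto
next
  case (3 x y) show ?case
    by (rule gi_eqI[where W="(gQ * x - x * gQ) + (gQ * y - y * gQ)"], blast intro: gi_rules 3, simp add: fs)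
next
  case (4 x y) show ?case
    by (rule gi_eqI[where W="(gQ * x - x * gQ) * y + x * (gQ * y - y * gQ)"], blast intro: gi_rules 4, simp add: fs)
qed

lemma cP': "x * gP - gP * x \<in> II"
  by (rule gi_eqI[where W="- (gP * x - x * gP)"], blast intro: gi_rules cP, simp)
lemma cQ': "x * gQ - gQ * x \<in> II"
  by (rule gi_eqI[where W="- (gQ * x - x * gQ)"], blast intro: gi_rules cQ, simp)



abbreviation "JJ \<equiv> gen_ideal (Uq_rels q)"
abbreviation "u2 \<equiv> (fa_const (q^2) :: gq fa)"
abbreviation "ui \<equiv> (fa_const (inverse (q^2)) :: gq fa)"
abbreviation "ud \<equiv> (fa_const (inverse (q - inverse q)) :: gq fa)"

lemma urels: "uk * uki - 1 \<in> JJ" "uki * uk - 1 \<in> JJ" "uk * ue - u2 * ue * uk \<in> JJ"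
  "uk * uf - ui * uf * uk \<in> JJ" "ue * uf - uf * ue - ud * (uk - uki) \<in> JJ"
  by (rule gen_ideal.base, simp add: Uq_rels_def Let_def)+

lemma te: "uki * ue - ui * ue * uki \<in> JJ"
  by (rule gi_eqI[where W="ui*(uki*uk - 1)*ue*uki - ui*uki*(uk*ue - u2*ue*uk)*uki - uki*ue*(uk*uki - 1)"],
      blast intro: gi_rules urels, simp add: fs q0)
lemma tf: "uki * uf - u2 * uf * uki \<in> JJ"
  by (rule gi_eqI[where W="u2*(uki*uk - 1)*uf*uki - u2*uki*(uk*uf - ui*uf*uk)*uki - uki*uf*(uk*uki - 1)"],
      blast intro: gi_rules urels, simp add: fs q0)

lemmas WS = gi_rmult[OF urels(1), of uk] gi_rmult[OF urels(2), of uki] gi_diff[OF urels(1) urels(2)]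
   urels te tf gen_ideal.zero

lemma psi1_rel: "r \<in> UKL_rels q \<Longrightarrow> ext g1 r \<in> JJ"
  unfolding UKL_rels_def Let_def
  by (elim insertE emptyE; hypsubst; (rule gi_eqI, rule WS, (simp add: ext_simps fs q0; fail)))

lemma psi2_rel: "r \<in> UKL_rels q \<Longrightarrow> ext g2 r \<in> JJ"
  unfolding UKL_rels_def Let_def
  by (elim insertE emptyE; hypsubst; (rule gi_eqI, rule WS, (simp add: ext_simps fs q0; fail)))

lemma phi1_rel: "s \<in> Uq_rels q \<Longrightarrow> ext h1 s \<in> II"
  unfolding Uq_rels_def Let_def
  apply (elim insertE emptyE; hypsubst)
  subgoal by (rule gi_eqI[where W="(gK * gKb + gL * gLb - 1) + gK*gQ + gQ*gKb + (gQ*gQ - gQ)"], blast intro: gi_rules rels(7) xKQ xQKb dQQ, simp add: ext_simps fs q0)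
  subgoal by (rule gi_eqI[where W="(gK * gKb + gL * gLb - 1) - (gK * gKb - gKb * gK) + gKb*gQ + gQ*gK + (gQ*gQ - gQ)"], blast intro: gi_rules rels(7) rels(3) xKbQ xQK dQQ, simp add: ext_simps fs q0)
  subgoal by (rule gi_eqI[where W="(gK * gE - c2 * gE * gK) + (-(gP*gK - gK*gP) + (gK * gKb * gK - gK))*gE + (gQ*gP)*gE - c2*gE*(gK * gKb * gK - gK) - c2*(gP*gE - gE*gP)*gK - c2*(gP*gE - gE*gP)*gQ - c2*gE*(gP*gQ)"], blast intro: gi_rules rels(8) cPK rels(1) dQP cPE dPQ, simp add: ext_simps fs q0)
  subgoal by (rule gi_eqI[where W="(gK * gF - ci * gF * gK) + (-(gP*gK - gK*gP) + (gK * gKb * gK - gK))*gF + (gQ*gP)*gF - ci*gF*(gK * gKb * gK - gK) - ci*(gP*gF - gF*gP)*gK - ci*(gP*gF - gF*gP)*gQ - ci*gF*(gP*gQ)"], blast intro: gi_rules rels(12) cPK rels(1) dQP cPF dPQ, simp add: ext_simps fs q0)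
  subgoal by (rule gi_eqI[where W="gP*(gE*gP - gP*gE)*gF + (gP*gP-gP)*gE*gF - gP*(gF*gP - gP*gF)*gE - (gP*gP - gP)*gF*gE + gP*(gE * gF - gF * gE - cd * ((gK + gL) - (gKb + gLb))) + cd*((gK * gKb * gK - gK) + gP*gL - (gP*gKb - gKb) - gP*gLb)"], blast intro: gi_rules cP'[of gE] cP'[of gF] dPP rels(16) rels(1) xPL xPKb xPLb, simp add: ext_simps fs q0)
  done

lemma phi2_rel: "s \<in> Uq_rels q \<Longrightarrow> ext h2 s \<in> II"
  unfolding Uq_rels_def Let_def
  apply (elim insertE emptyE; hypsubst)
  subgoal by (rule gi_eqI[where W="(gK * gKb + gL * gLb - 1) + gL*gP + gP*gLb + (gP*gP - gP)"], blast intro: gi_rules rels(7) xLP xPLb dPP, simp add: ext_simps fs q0)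
  subgoal by (rule gi_eqI[where W="(gK * gKb + gL * gLb - 1) - (gL * gLb - gLb * gL) + gLb*gP + gP*gL + (gP*gP - gP)"], blast intro: gi_rules rels(7) rels(6) xLbP xPL dPP, simp add: ext_simps fs q0)
  subgoal by (rule gi_eqI[where W="(gL * gE - c2 * gE * gL) + (-(gQ*gL - gL*gQ) + (gL * gLb * gL - gL))*gE + (gP*gQ)*gE - c2*gE*(gL * gLb * gL - gL) - c2*(gQ*gE - gE*gQ)*gL - c2*(gQ*gE - gE*gQ)*gP - c2*gE*(gQ*gP)"], blast intro: gi_rules rels(9) cQL rels(4) dPQ cQE dQP, simp add: ext_simps fs q0)
  subgoal by (rule gi_eqI[where W="(gL * gF - ci * gF * gL) + (-(gQ*gL - gL*gQ) + (gL * gLb * gL - gL))*gF + (gP*gQ)*gF - ci*gF*(gL * gLb * gL - gL) - ci*(gQ*gF - gF*gQ)*gL - ci*(gQ*gF - gF*gQ)*gP - ci*gF*(gQ*gP)"], blast intro: gi_rules rels(13) cQL rels(4) dPQ cQF dQP, simp add: ext_simps fs q0)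
  subgoal by (rule gi_eqI[where W="gQ*(gE*gQ - gQ*gE)*gF + (gQ*gQ-gQ)*gE*gF - gQ*(gF*gQ - gQ*gF)*gE - (gQ*gQ-gQ)*gF*gE + gQ*(gE * gF - gF * gE - cd * ((gK + gL) - (gKb + gLb))) + cd*((gL * gLb * gL - gL) + gQ*gK - (gQ*gLb - gLb) - gQ*gKb)"], blast intro: gi_rules cQ'[of gE] cQ'[of gF] dQQ rels(16) rels(4) xQK xQLb xQKb, simp add: ext_simps fs q0)
  done


lemma comp1: "ext g1 (ext h1 y) - y \<in> JJ"
proof (rule ah_id_mod[OF ah_comp[OF alg_hom_ext alg_hom_ext]])
  fix a show "ext g1 (ext h1 (fa_gen a)) - fa_gen a \<in> JJ"
  proof (cases a)
    case Ge then show ?thesis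
      by (rule_tac gi_eqI[where W="(uk*uki - 1)*ue"], blast intro: gi_rules urels, simp add: ext_simps fs)
  next
    case Gf then show ?thesis
      by (rule_tac gi_eqI[where W="(uk*uki - 1)*uf"], blast intro: gi_rules urels, simp add: ext_simps fs)
  qed (simp_all add: ext_simps gen_ideal.zero)
qed

lemma comp2: "ext g2 (ext h2 y) - y \<in> JJ"
proof (rule ah_id_mod[OF ah_comp[OF alg_hom_ext alg_hom_ext]])
  fix a show "ext g2 (ext h2 (fa_gen a)) - fa_gen a \<in> JJ"
  proof (cases a)
    case Ge then show ?thesis
      by (rule_tac gi_eqI[where W="(uk*uki - 1)*ue"], blast intro: gi_rules urels, simp add: ext_simps fs)
  next
    case Gf then show ?thesis
      by (rule_tac gi_eqI[where W="(uk*uki - 1)*uf"], blast intro: gi_rules urels, simp add: ext_simps fs)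
  qed (simp_all add: ext_simps gen_ideal.zero)
qed

lemma theta: "gP * ext h1 (ext g1 x) + gQ * ext h2 (ext g2 x) - x \<in> II"
proof (induction x rule: fa_induct)
  case (1 c) show ?case
    by (rule gi_eqI[where W="(gK * gKb + gL * gLb - 1) * fa_const c"], blast intro: gi_rules rels, simp add: ext_simps fs)
next
  case (2 a) show ?case
  proof (cases a)
    case GK then show ?thesis
      by (rule_tac gi_eqI[where W="(gK * gKb * gK - gK) + gP * gQ"], blast intro: gi_rules rels dPQ, simp add: ext_simps fs)
  next
    case GKb then show ?thesis
      by (rule_tac gi_eqI[where W="(gP * gKb - gKb) + gP * gQ"], blast intro: gi_rules xPKb dPQ, simp add: ext_simps fs)
  next
    case GL then show ?thesis
      by (rule_tac gi_eqI[where W="(gL * gLb * gL - gL) + gQ * gP"], blast intro: gi_rules rels dQP, simp add: ext_simps fs)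
  next
    case GLb then show ?thesis
      by (rule_tac gi_eqI[where W="(gQ * gLb - gLb) + gQ * gP"], blast intro: gi_rules xQLb dQP, simp add: ext_simps fs)
  next
    case GE then show ?thesis
      by (rule_tac gi_eqI[where W="(gP*gP - gP)*gE + (gQ*gQ - gQ)*gE + (gK * gKb + gL * gLb - 1)*gE"],
          blast intro: gi_rules rels dPP dQQ, simp add: ext_simps fs)
  next
    case GF then show ?thesis
      by (rule_tac gi_eqI[where W="(gP*gP - gP)*gF + (gQ*gQ - gQ)*gF + (gK * gKb + gL * gLb - 1)*gF"],
          blast intro: gi_rules rels dPP dQQ, simp add: ext_simps fs)
  qed
next
  case (3 x y) show ?case
    by (rule gi_eqI[where W="(gP * ext h1 (ext g1 x) + gQ * ext h2 (ext g2 x) - x) + (gP * ext h1 (ext g1 y) + gQ * ext h2 (ext g2 y) - y)"],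
        blast intro: gi_rules 3, simp add: ext_add fs)
next
  case (4 x y)
  define A where "A = ext h1 (ext g1 x)"
  define C where "C = ext h1 (ext g1 y)"
  define B where "B = ext h2 (ext g2 x)"
  define D where "D = ext h2 (ext g2 y)"
  have ih1: "gP * A + gQ * B - x \<in> II" using 4(1) by (simp add: A_def B_def)
  have ih2: "gP * C + gQ * D - y \<in> II" using 4(2) by (simp add: C_def D_def)
  have "gP * (A * C) + gQ * (B * D) - x * y \<in> II"
    by (rule gi_eqI[where W="(gP * A + gQ * B - x) * (gP * C + gQ * D) + x * (gP * C + gQ * D - y)
       - (gP*(A*gP - gP*A)*C + (gP*gP-gP)*A*C + gP*(A*gQ - gQ*A)*D + (gP*gQ)*A*D
          + gQ*(B*gP - gP*B)*C + (gQ*gP)*B*C + gQ*(B*gQ - gQ*B)*D + (gQ*gQ-gQ)*B*D)"],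
        blast intro: gi_rules ih1 ih2 cP' cQ' dPP dQQ dPQ dQP, simp add: fs)
  then show ?case by (simp add: A_def B_def C_def D_def ext_mult)
qed


end

theorem proposition5:
  fixes q :: complex
  assumes "q \<noteq> 0" and "q \<noteq> 1" and "q \<noteq> -1"
  defines "K \<equiv> fa_gen GK" and "Kb \<equiv> fa_gen GKb" and "L \<equiv> fa_gen GL" and "Lb \<equiv> fa_gen GLb"
      and "E \<equiv> fa_gen GE" and "F \<equiv> fa_gen GF"
      and "k \<equiv> fa_gen Gk" and "ki \<equiv> fa_gen Gki" and "e \<equiv> fa_gen Ge" and "f \<equiv> fa_gen Gf"
      and "P \<equiv> fa_gen GK * fa_gen GKb" and "Q \<equiv> fa_gen GL * fa_gen GLb"
      and "I \<equiv> UKL_ideal q" and "J \<equiv> Uq_ideal q"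
  shows
    \<comment> \<open>P and Q are central idempotents with PQ = QP = 0\<close>
    "(\<forall>x. cong_mod I (P * x) (x * P)) \<and> (\<forall>x. cong_mod I (Q * x) (x * Q))
     \<and> cong_mod I (P * P) P \<and> cong_mod I (Q * Q) Q
     \<and> cong_mod I (P * Q) 0 \<and> cong_mod I (Q * P) 0
     \<comment> \<open>PUP and QUQ are two-sided ideals\<close>
     \<and> (\<forall>a b. \<exists>c. cong_mod I (P * a * P + P * b * P) (P * c * P))
     \<and> (\<forall>a x. \<exists>c d. cong_mod I (x * (P * a * P)) (P * c * P) \<and> cong_mod I ((P * a * P) * x) (P * d * P))
     \<and> (\<forall>a b. \<exists>c. cong_mod I (Q * a * Q + Q * b * Q) (Q * c * Q))
     \<and> (\<forall>a x. \<exists>c d. cong_mod I (x * (Q * a * Q)) (Q * c * Q) \<and> cong_mod I ((Q * a * Q) * x) (Q * d * Q))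
     \<comment> \<open>U = PUP + QUQ, and the sum is direct\<close>
     \<and> (\<forall>x. \<exists>a b. cong_mod I x (P * a * P + Q * b * Q))
     \<and> (\<forall>a b. cong_mod I (P * a * P) (Q * b * Q) \<longrightarrow> cong_mod I (P * a * P) 0)
     \<comment> \<open>an algebra isomorphism U_{K,L,norm} to U_q(sl_2) (+) U_q(sl_2) with the given values\<close>
     \<and> (\<exists>\<Psi>1 \<Psi>2 :: gkl fa \<Rightarrow> gq fa.
          alg_hom \<Psi>1 \<and> alg_hom \<Psi>2
          \<and> (\<forall>x \<in> I. \<Psi>1 x \<in> J \<and> \<Psi>2 x \<in> J)
          \<and> (\<forall>x. \<Psi>1 x \<in> J \<and> \<Psi>2 x \<in> J \<longrightarrow> x \<in> I)
          \<and> (\<forall>y1 y2. \<exists>x. cong_mod J (\<Psi>1 x) y1 \<and> cong_mod J (\<Psi>2 x) y2)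
          \<and> cong_mod J (\<Psi>1 K) k \<and> cong_mod J (\<Psi>2 K) 0
          \<and> cong_mod J (\<Psi>1 Kb) ki \<and> cong_mod J (\<Psi>2 Kb) 0
          \<and> cong_mod J (\<Psi>1 (P * E)) e \<and> cong_mod J (\<Psi>2 (P * E)) 0
          \<and> cong_mod J (\<Psi>1 (P * F)) f \<and> cong_mod J (\<Psi>2 (P * F)) 0
          \<and> cong_mod J (\<Psi>1 L) 0 \<and> cong_mod J (\<Psi>2 L) k
          \<and> cong_mod J (\<Psi>1 Lb) 0 \<and> cong_mod J (\<Psi>2 Lb) ki
          \<and> cong_mod J (\<Psi>1 (Q * E)) 0 \<and> cong_mod J (\<Psi>2 (Q * E)) e
          \<and> cong_mod J (\<Psi>1 (Q * F)) 0 \<and> cong_mod J (\<Psi>2 (Q * F)) f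
          \<and> cong_mod J (\<Psi>1 P) 1 \<and> cong_mod J (\<Psi>2 P) 0
          \<and> cong_mod J (\<Psi>1 Q) 0 \<and> cong_mod J (\<Psi>2 Q) 1)"
  proof -
  have I: "I = II q" by (simp add: I_def UKL_ideal_def)
  have J: "J = JJ q" by (simp add: J_def Uq_ideal_def)
  note q0 = assms(1)
  note F = rels[OF q0] dPP[OF q0] dQQ[OF q0] dPQ[OF q0] dQP[OF q0] cP[OF q0] cQ[OF q0] cP'[OF q0] cQ'[OF q0]
  have c1: "\<forall>x. gP * x - x * gP \<in> II q" using cP[OF q0] by blast
  have c2: "\<forall>x. gQ * x - x * gQ \<in> II q" using cQ[OF q0] by blast
  have c3: "\<forall>a b. \<exists>c. gP * a * gP + gP * b * gP - gP * c * gP \<in> II q"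
  proof (intro allI)
    fix a b show "\<exists>c. gP * a * gP + gP * b * gP - gP * c * gP \<in> II q"
      by (rule exI[of _ "a + b"]) (simp add: algebra_simps gen_ideal.zero)
  qed
  have c4: "\<forall>a b. \<exists>c. gQ * a * gQ + gQ * b * gQ - gQ * c * gQ \<in> II q"
  proof (intro allI)
    fix a b show "\<exists>c. gQ * a * gQ + gQ * b * gQ - gQ * c * gQ \<in> II q"
      by (rule exI[of _ "a + b"]) (simp add: algebra_simps gen_ideal.zero)
  qed
  have c5: "\<exists>c d. x * (gP * a * gP) - gP * c * gP \<in> II q \<and> gP * a * gP * x - gP * d * gP \<in> II q" for a x
  proof (intro exI conjI)
    show "x * (gP * a * gP) - gP * (x * a) * gP \<in> II q"
      by (rule gi_eqI[where W="- ((gP * x - x * gP) * (a * gP))"], blast intro: gi_rules F, simp add: fs)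
    show "gP * a * gP * x - gP * (a * x) * gP \<in> II q"
      by (rule gi_eqI[where W="gP * a * (gP * x - x * gP)"], blast intro: gi_rules F, simp add: fs)
  qed
  have c6: "\<exists>c d. x * (gQ * a * gQ) - gQ * c * gQ \<in> II q \<and> gQ * a * gQ * x - gQ * d * gQ \<in> II q" for a x
  proof (intro exI conjI)
    show "x * (gQ * a * gQ) - gQ * (x * a) * gQ \<in> II q"
      by (rule gi_eqI[where W="- ((gQ * x - x * gQ) * (a * gQ))"], blast intro: gi_rules F, simp add: fs)
    show "gQ * a * gQ * x - gQ * (a * x) * gQ \<in> II q"
      by (rule gi_eqI[where W="gQ * a * (gQ * x - x * gQ)"], blast intro: gi_rules F, simp add: fs)
  qed
  have c7: "\<exists>a b. x - (gP * a * gP + gQ * b * gQ) \<in> II q" for x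
  proof (intro exI)
    show "x - (gP * x * gP + gQ * x * gQ) \<in> II q"
      by (rule gi_eqI[where W="- (x*(gP*gP-gP)) - x*(gQ*gQ-gQ) - x*(gK * gKb + gL * gLb - 1) - (gP*x - x*gP)*gP - (gQ*x - x*gQ)*gQ"],
          blast intro: gi_rules F, simp add: fs)
  qed
  have c8: "gP * a * gP - 0 \<in> II q" if h: "gP * a * gP - gQ * b * gQ \<in> II q" for a b
    by (rule gi_eqI[where W="gP*(gP * a * gP - gQ * b * gQ) - (gP*gP-gP)*a*gP + (gP*gQ)*b*gQ"],
        blast intro: gi_rules F h, simp add: fs)
  have inj: "x \<in> II q" if h: "ext g1 x \<in> JJ q" "ext g2 x \<in> JJ q" for x
  proof -
    have a: "ext h1 (ext g1 x) \<in> II q" by (rule ah_ideal[OF alg_hom_ext phi1_rel[OF q0] h(1)])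
    have b: "ext h2 (ext g2 x) \<in> II q" by (rule ah_ideal[OF alg_hom_ext phi2_rel[OF q0] h(2)])
    show ?thesis
      by (rule gi_eqI[where W="gP * ext h1 (ext g1 x) + gQ * ext h2 (ext g2 x) - (gP * ext h1 (ext g1 x) + gQ * ext h2 (ext g2 x) - x)"],
          blast intro: gi_rules a b theta[OF q0], simp)
  qed
  have surj: "\<exists>x. ext g1 x - y1 \<in> JJ q \<and> ext g2 x - y2 \<in> JJ q" for y1 y2
  proof (intro exI conjI)
    show "ext g1 (gP * ext h1 y1 + gQ * ext h2 y2) - y1 \<in> JJ q"
      by (rule gi_eqI[where W="(uk*uki - 1) * ext g1 (ext h1 y1) + (ext g1 (ext h1 y1) - y1)"],
          blast intro: gi_rules urels[OF q0] comp1[OF q0], simp add: ext_simps fs)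
    show "ext g2 (gP * ext h1 y1 + gQ * ext h2 y2) - y2 \<in> JJ q"
      by (rule gi_eqI[where W="(uk*uki - 1) * ext g2 (ext h2 y2) + (ext g2 (ext h2 y2) - y2)"],
          blast intro: gi_rules urels[OF q0] comp2[OF q0], simp add: ext_simps fs)
  qed
  have v1: "ext g1 (gP * gE) - ue \<in> JJ q" "ext g2 (gQ * gE) - ue \<in> JJ q"
    "ext g1 (gP * gF) - uf \<in> JJ q" "ext g2 (gQ * gF) - uf \<in> JJ q"
    "ext g1 gP - 1 \<in> JJ q" "ext g2 gQ - 1 \<in> JJ q"
    by (rule gi_eqI, rule gi_rmult[OF urels(1)[OF q0]] urels(1)[OF q0], simp add: ext_simps fs)+
  have hI1: "ext g1 x \<in> JJ q" if "x \<in> II q" for x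
    by (rule ah_ideal[OF alg_hom_ext psi1_rel[OF q0] that])
  have hI2: "ext g2 x \<in> JJ q" if "x \<in> II q" for x
    by (rule ah_ideal[OF alg_hom_ext psi2_rel[OF q0] that])
  show ?thesis
    unfolding I J cong_mod_def K_def Kb_def L_def Lb_def E_def F_def k_def ki_def e_def f_def P_def Q_def
    apply (intro conjI)
    using c1 c2 c3 c4 c5 c6 c7 c8 F apply (simp_all only: diff_zero)
    apply blast+
    apply (rule exI[of _ "ext g1"], rule exI[of _ "ext g2"])
    apply (intro conjI)
    apply (rule alg_hom_ext)
    apply (rule alg_hom_ext)
    using hI1 hI2 apply blast
    using inj apply blast
    using surj apply blast
    apply ((simp_all only: v1)?)
    apply (simp_all add: ext_simps gen_ideal.zero)
    done
qed

end
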